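(* Let $n,m\ge 3$ and let $G=P_n\square P_m$ be the grid graph. Every $3$-minimal of $G$ contains at least two vertices on the same line.
   Context: The grid graph $P_n\square P_m$ has vertex set $\{(i,j):0\le i\le n-1,\ 0\le j\le m-1\}$, with $(i,j)$ adjacent to $(k,l)$ iff $|i-k|+|j-l|=1$; distance $d((i,j),(k,l))=|i-k|+|j-l|$. A vertex $w$ resolves $u,v$ if $d(w,u)\ne d(w,v)$; a set $R$ is resolving if every pair of distinct vertices is resolved by some vertex of $R$; a $3$-minimal is a resolving set $R$ of cardinality $3$ such that no $R\setminus\{x\}$, $x\in R$, is resolving. Two vertices are on the same line if they share their first coordinate or share their second coordinate. *)

theory Defs
  imports Main
begin

definition grid_vertices :: "nat \<Rightarrow> nat \<Rightarrow> (nat \<times> nat) set" where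
  "grid_vertices n m = {(i, j). i < n \<and> j < m}"

definition grid_dist :: "nat \<times> nat \<Rightarrow> nat \<times> nat \<Rightarrow> nat" where
  "grid_dist u v = nat \<bar>int (fst u) - int (fst v)\<bar> + nat \<bar>int (snd u) - int (snd v)\<bar>"

definition resolves :: "nat \<times> nat \<Rightarrow> nat \<times> nat \<Rightarrow> nat \<times> nat \<Rightarrow> bool" where
  "resolves w u v \<longleftrightarrow> grid_dist w u \<noteq> grid_dist w v"

definition resolving_set :: "nat \<Rightarrow> nat \<Rightarrow> (nat \<times> nat) set \<Rightarrow> bool" where
  "resolving_set n m R \<longleftrightarrow> R \<subseteq> grid_vertices n m \<and>
     (\<forall>u \<in> grid_vertices n m. \<forall>v \<in> grid_vertices n m. u \<noteq> v \<longrightarrow> (\<exists>w \<in> R. resolves w u v))"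

definition three_minimal :: "nat \<Rightarrow> nat \<Rightarrow> (nat \<times> nat) set \<Rightarrow> bool" where
  "three_minimal n m R \<longleftrightarrow> resolving_set n m R \<and> card R = 3 \<and>
     (\<forall>x \<in> R. \<not> resolving_set n m (R - {x}))"

definition same_line :: "nat \<times> nat \<Rightarrow> nat \<times> nat \<Rightarrow> bool" where
  "same_line u v \<longleftrightarrow> fst u = fst v \<or> snd u = snd v"

end

theory Submission
  imports Defs
begin

lemma notres_A:
  assumes "i + 1 < n" "j + 1 < m"
    and "\<forall>w\<in>R. (fst w \<le> i \<and> snd w \<le> j) \<or> (fst w \<ge> i+1 \<and> snd w \<ge> j+1)"
  shows "\<not> resolving_set n m R"
proof
  assume r: "resolving_set n m R"
  have "(i, j+1) \<in> grid_vertices n m" "(i+1, j) \<in> grid_vertices n m"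
    using assms by (auto simp: grid_vertices_def)
  then obtain w where w: "w \<in> R" "resolves w (i, j+1) (i+1, j)"
    using r unfolding resolving_set_def by fastforce
  obtain a b where ab: "w = (a,b)" by fastforce
  show False using w assms(3) ab
    by (auto simp: resolves_def grid_dist_def)
qed

lemma notres_B:
  assumes "i + 1 < n" "j + 1 < m"
    and "\<forall>w\<in>R. (fst w \<le> i \<and> snd w \<ge> j+1) \<or> (fst w \<ge> i+1 \<and> snd w \<le> j)"
  shows "\<not> resolving_set n m R"
proof
  assume r: "resolving_set n m R"
  have "(i, j) \<in> grid_vertices n m" "(i+1, j+1) \<in> grid_vertices n m"
    using assms by (auto simp: grid_vertices_def)
  then obtain w where w: "w \<in> R" "resolves w (i, j) (i+1, j+1)"
    using r unfolding resolving_set_def by fastforce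
  obtain a b where ab: "w = (a,b)" by fastforce
  show False using w assms(3) ab
    by (auto simp: resolves_def grid_dist_def)
qed

lemma key:
  assumes "fst p < fst q" "fst q < fst r"
    and "snd p \<noteq> snd q" "snd p \<noteq> snd r" "snd q \<noteq> snd r"
    and "{p,q,r} \<subseteq> grid_vertices n m"
  shows "\<not> resolving_set n m {p,q,r}"
proof -
  have g: "fst r < n" "snd p < m" "snd q < m" "snd r < m"
    using assms(6) by (auto simp: grid_vertices_def)
  consider "snd p < snd q \<and> snd p < snd r" | "snd p > snd q \<and> snd p > snd r"
    | "snd r > snd p \<and> snd r > snd q" | "snd r < snd p \<and> snd r < snd q"
    using assms(3-5) by linarith
  then show ?thesis
  proof cases
    case 1 show ?thesis
      by (rule notres_A[where i="fst p" and j="snd p"]) (use 1 assms g in auto)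
  next
    case 2 show ?thesis
      by (rule notres_B[where i="fst p" and j="max (snd q) (snd r)"]) (use 2 assms g in auto)
  next
    case 3 show ?thesis
      by (rule notres_A[where i="fst q" and j="max (snd p) (snd q)"]) (use 3 assms g in auto)
  next
    case 4 show ?thesis
      by (rule notres_B[where i="fst q" and j="snd r"]) (use 4 assms g in auto)
  qed
qed

theorem lemma3:
  fixes n m :: nat and R :: "(nat \<times> nat) set"
  assumes "n \<ge> 3" and "m \<ge> 3" and "three_minimal n m R"
  shows "\<exists>u \<in> R. \<exists>v \<in> R. u \<noteq> v \<and> same_line u v"
proof (rule ccontr)
  assume H: "\<not> ?thesis"
  have res: "resolving_set n m R" and c: "card R = 3"
    using assms(3) by (auto simp: three_minimal_def)
  then obtain x y z where R: "R = {x,y,z}" "x \<noteq> y" "x \<noteq> z" "y \<noteq> z"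
    by (metis card_3_iff)
  have sub: "R \<subseteq> grid_vertices n m" using res by (simp add: resolving_set_def)
  have d: "fst x \<noteq> fst y" "fst x \<noteq> fst z" "fst y \<noteq> fst z"
     "snd x \<noteq> snd y" "snd x \<noteq> snd z" "snd y \<noteq> snd z"
    using H R by (auto simp: same_line_def)
  have "\<not> resolving_set n m R"
  proof -
    consider "fst x < fst y \<and> fst y < fst z" | "fst x < fst z \<and> fst z < fst y"
      | "fst y < fst x \<and> fst x < fst z" | "fst y < fst z \<and> fst z < fst x"
      | "fst z < fst x \<and> fst x < fst y" | "fst z < fst y \<and> fst y < fst x"
      using d by linarith
    then show ?thesis
    proof cases
      case 1 thus ?thesis using key[of x y z n m] d sub R by auto
    next
      case 2 thus ?thesis using key[of x z y n m] d sub R by (auto simp: insert_commute)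
    next
      case 3 thus ?thesis using key[of y x z n m] d sub R by (auto simp: insert_commute)
    next
      case 4 thus ?thesis using key[of y z x n m] d sub R by (auto simp: insert_commute)
    next
      case 5 thus ?thesis using key[of z x y n m] d sub R by (auto simp: insert_commute)
    next
      case 6 thus ?thesis using key[of z y x n m] d sub R by (auto simp: insert_commute)
    qed
  qed
  with res show False by simp
qed

end
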